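(* Let $m,n\ge1$ and let $A\in\{0,1\}^{m\times n}$ have exactly three ones in each row. Let $x^0,\bar x^0\in\mathrm{NPadj}(A)$ be as defined in the context. Then $x^0$ and $\bar x^0$ are adjacent vertices of $\operatorname{conv}(\mathrm{NPadj}(A))$ if and only if $F_1=\emptyset$, equivalently if and only if $\mathrm{Part}(A)=\emptyset$.
   Context: **Definition of $\mathrm{NPadj}(A)$.** Let $m,n\ge1$ and let $A\in\{0,1\}^{m\times n}$ have exactly three ones in each row. Index the coordinates of $\mathbb{R}^{3n+3}$ by $y_1,y_2,y_3$ and by $x_j,\bar x_j,x'_j$ for $j\in[n]=\{1,\dots,n\}$. Then $\mathrm{NPadj}(A)$ is the set of vectors in $\{0,1\}^{3n+3}$ satisfying: - $x_j+\bar x_j=1$ for all $j\in[n]$; - $y_1+y_2+x'_j+\bar x_j=2$ for all $j\in[n]$; - for each row of $A$, with ones in columns $i<j<k$, the equation $y_3+x_i+x'_j+x'_k=2$. **Special points and sets.** - $x^0$ is the point with $y_1=y_2=y_3=0$, $x_j=0$ and $x'_j=\bar x_j=1$ for all $j\in[n]$. - $\bar x^0=\mathbf 1-x^0$. - $F_1=\{x\in\mathrm{NPadj}(A): y_1=0,y_2=1,y_3=1\}$. - $\mathrm{Part}(A)=\{z\in\{0,1\}^n: Az=\mathbf 1\}$. Two vertices are adjacent if their convex hull is an edge (1-dimensional face) of the polytope. *)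

theory Defs
  imports "HOL-Analysis.Analysis"
begin

text \<open>Coordinates of R^(3n+3): y1,y2,y3 and, for each column j, x_j, xbar_j, x'_j.
  Columns are elements of a finite linearly ordered type 'n (playing the role of [n]).\<close>

datatype 'n coord = Y1 | Y2 | Y3 | X 'n | XB 'n | XP 'n

lemma UNIV_coord: "(UNIV :: 'n coord set) = {Y1, Y2, Y3} \<union> range X \<union> range XB \<union> range XP"
  apply (rule set_eqI)
  subgoal for c by (cases c) auto
  done

instance coord :: (finite) finite
  by standard (simp add: UNIV_coord)

definition three_ones :: "('m::finite \<Rightarrow> 'n::finite \<Rightarrow> int) \<Rightarrow> bool" where
  "three_ones A \<longleftrightarrow> (\<forall>i j. A i j \<in> {0, 1}) \<and> (\<forall>i. card {j. A i j = 1} = 3)"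

definition NPadj :: "('m::finite \<Rightarrow> 'n::{finite,linorder} \<Rightarrow> int) \<Rightarrow> (real ^ 'n coord) set" where
  "NPadj A = {x. (\<forall>c. x $ c \<in> {0, 1})
      \<and> (\<forall>j. x $ X j + x $ XB j = 1)
      \<and> (\<forall>j. x $ Y1 + x $ Y2 + x $ XP j + x $ XB j = 2)
      \<and> (\<forall>r a b c. a < b \<and> b < c \<and> A r a = 1 \<and> A r b = 1 \<and> A r c = 1 \<longrightarrow>
            x $ Y3 + x $ X a + x $ XP b + x $ XP c = 2)}"

definition x0 :: "real ^ ('n::finite coord)" where
  "x0 = (\<chi> c. case c of Y1 \<Rightarrow> 0 | Y2 \<Rightarrow> 0 | Y3 \<Rightarrow> 0 | X j \<Rightarrow> 0 | XB j \<Rightarrow> 1 | XP j \<Rightarrow> 1)"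

definition x0bar :: "real ^ ('n::finite coord)" where
  "x0bar = 1 - x0"

definition F1 :: "('m::finite \<Rightarrow> 'n::{finite,linorder} \<Rightarrow> int) \<Rightarrow> (real ^ 'n coord) set" where
  "F1 A = {x \<in> NPadj A. x $ Y1 = 0 \<and> x $ Y2 = 1 \<and> x $ Y3 = 1}"

definition Part :: "('m::finite \<Rightarrow> 'n::finite \<Rightarrow> int) \<Rightarrow> ('n \<Rightarrow> int) set" where
  "Part A = {z. (\<forall>j. z j \<in> {0, 1}) \<and> (\<forall>i. (\<Sum>j\<in>UNIV. A i j * z j) = 1)}"

definition adjacent_vertices :: "'a::euclidean_space set \<Rightarrow> 'a \<Rightarrow> 'a \<Rightarrow> bool" where
  "adjacent_vertices P u v \<longleftrightarrow> {u} face_of P \<and> {v} face_of P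
     \<and> convex hull {u, v} face_of P \<and> aff_dim (convex hull {u, v}) = 1"

end

theory Submission
  imports Defs
begin

lemma sorted3:
  fixes S :: "'a::linorder set"
  assumes "card S = 3"
  shows "\<exists>a b c. a < b \<and> b < c \<and> S = {a,b,c}"
proof -
  obtain x y z where S: "S = {x,y,z}" "x \<noteq> y" "y \<noteq> z" "x \<noteq> z"
    using assms unfolding card_3_iff by blast
  have w: "a < b \<Longrightarrow> b < c \<Longrightarrow> S = {a,b,c} \<Longrightarrow> \<exists>a b c. a < b \<and> b < c \<and> S = {a,b,c}" for a b c
    by blast
  consider "x<y" "y<z" | "x<z" "z<y" | "y<x" "x<z" | "y<z" "z<x" | "z<x" "x<y" | "z<y" "y<x"
    using S(2-4) less_linear[of x y] less_linear[of y z] less_linear[of x z] by blast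
  then show ?thesis
  proof cases
    case 1 then show ?thesis using S(1) w by simp
  next
    case 2 then show ?thesis using S(1) w[of x z y] by (simp add: insert_commute)
  next
    case 3 then show ?thesis using S(1) w[of y x z] by (simp add: insert_commute)
  next
    case 4 then show ?thesis using S(1) w[of y z x] by (simp add: insert_commute)
  next
    case 5 then show ?thesis using S(1) w[of z x y] by (simp add: insert_commute)
  next
    case 6 then show ?thesis using S(1) w[of z y x] by (simp add: insert_commute)
  qed
qed

lemma row_sum:
  fixes A :: "'m::finite \<Rightarrow> 'n::{finite,linorder} \<Rightarrow> int"
  assumes t: "three_ones A" and abc: "a < b" "b < c" "A r a = 1" "A r b = 1" "A r c = 1"
  shows "(\<Sum>j\<in>UNIV. A r j * f j) = f a + f b + f c"
proof -
  let ?S = "{j. A r j = 1}"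
  have c3: "card ?S = 3" using t unfolding three_ones_def by blast
  have sub: "{a,b,c} \<subseteq> ?S" using abc by auto
  have "a < c" using abc by auto
  hence "card {a,b,c} = 3" using abc by (auto simp: card_insert_if)
  hence eq: "?S = {a,b,c}" using sub c3
    by (metis card_subset_eq finite)
  have "(\<Sum>j\<in>UNIV. A r j * f j) = (\<Sum>j\<in>UNIV. if j \<in> ?S then f j else 0)"
  proof (rule sum.cong)
    fix j
    have "A r j \<in> {0,1}" using t unfolding three_ones_def by blast
    thus "A r j * f j = (if j \<in> ?S then f j else 0)" by auto
  qed simp
  also have "\<dots> = (\<Sum>j\<in>?S. f j)" by (simp add: sum.If_cases)
  also have "\<dots> = f a + f b + f c" using abc eq \<open>a < c\<close> by (simp add: add.assoc less_imp_neq)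
  finally show ?thesis .
qed

lemma row_exists:
  fixes A :: "'m::finite \<Rightarrow> 'n::{finite,linorder} \<Rightarrow> int"
  assumes t: "three_ones A"
  shows "\<exists>a b c. a < b \<and> b < c \<and> A r a = 1 \<and> A r b = 1 \<and> A r c = 1"
proof -
  have "card {j. A r j = 1} = 3" using t unfolding three_ones_def by blast
  then obtain a b c where "a < b" "b < c" "{j. A r j = 1} = {a,b,c}" using sorted3 by blast
  thus ?thesis by blast
qed

lemma key:
  fixes A :: "'m::finite \<Rightarrow> 'n::{finite,linorder} \<Rightarrow> int"
  assumes t: "three_ones A" and x: "x \<in> NPadj A" and y: "x $ Y1 + x $ Y2 = 1"
  shows "Part A \<noteq> {}"
proof -
  define z where "z j = (if x $ X j = x $ Y3 then 1 else (0::int))" for j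
  have xv: "\<And>c. x $ c \<in> {0,1}" and xb: "\<And>j. x $ X j + x $ XB j = 1"
    and xp: "\<And>j. x $ Y1 + x $ Y2 + x $ XP j + x $ XB j = 2"
    and rw: "\<And>r a b c. a < b \<Longrightarrow> b < c \<Longrightarrow> A r a = 1 \<Longrightarrow> A r b = 1 \<Longrightarrow> A r c = 1 \<Longrightarrow>
            x $ Y3 + x $ X a + x $ XP b + x $ XP c = 2"
    using x unfolding NPadj_def by auto
  have xpx: "x $ XP j = x $ X j" for j using xb[of j] xp[of j] y by linarith
  have "z \<in> Part A"
    unfolding Part_def
  proof (intro CollectI conjI allI)
    fix j show "z j \<in> {0,1}" by (simp add: z_def)
  next
    fix i
    obtain a b c where abc: "a < b" "b < c" "A i a = 1" "A i b = 1" "A i c = 1"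
      using row_exists[OF t] by blast
    have e: "x $ Y3 + x $ X a + x $ X b + x $ X c = 2" using rw[OF abc] xpx by simp
    have "z a + z b + z c = 1"
      using e xv[of Y3] xv[of "X a"] xv[of "X b"] xv[of "X c"]
      unfolding z_def by auto
    thus "(\<Sum>j\<in>UNIV. A i j * z j) = 1" using row_sum[OF t abc] by simp
  qed
  thus ?thesis by blast
qed

lemma x0_in:
  fixes A :: "'m::finite \<Rightarrow> 'n::{finite,linorder} \<Rightarrow> int"
  shows "(x0 :: real ^ 'n coord) \<in> NPadj A" "(x0bar :: real ^ 'n coord) \<in> NPadj A"
  unfolding NPadj_def x0bar_def x0_def by (auto split: coord.split)

lemma x0_comp: "(x0 :: real ^ 'n::finite coord) $ Y1 = 0" "(x0bar :: real ^ 'n::finite coord) $ Y1 = 1"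
  "(x0 :: real ^ 'n::finite coord) $ Y2 = 0" "(x0bar :: real ^ 'n::finite coord) $ Y2 = 1"
  unfolding x0bar_def x0_def by auto

lemma x0_ne: "(x0 :: real ^ 'n::finite coord) \<noteq> x0bar"
  by (metis x0_comp(1,2) zero_neq_one)

lemma Part_F1:
  fixes A :: "'m::finite \<Rightarrow> 'n::{finite,linorder} \<Rightarrow> int"
  assumes t: "three_ones A" and z: "z \<in> Part A"
  shows "F1 A \<noteq> {}"
proof -
  define p :: "real ^ 'n coord" where "p = (\<chi> c. case c of Y1 \<Rightarrow> 0 | Y2 \<Rightarrow> 1 | Y3 \<Rightarrow> 1
     | X j \<Rightarrow> of_int (z j) | XB j \<Rightarrow> 1 - of_int (z j) | XP j \<Rightarrow> of_int (z j))"
  have zv: "\<And>j. z j \<in> {0,1}" and zs: "\<And>i. (\<Sum>j\<in>UNIV. A i j * z j) = 1"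
    using z unfolding Part_def by auto
  have "p \<in> NPadj A"
    unfolding NPadj_def
  proof (intro CollectI conjI allI impI)
    fix c show "p $ c \<in> {0,1}" using zv by (cases c) (auto simp: p_def)
  next
    fix j show "p $ X j + p $ XB j = 1" by (simp add: p_def)
  next
    fix j show "p $ Y1 + p $ Y2 + p $ XP j + p $ XB j = 2" by (simp add: p_def)
  next
    fix r a b c assume h: "a < b \<and> b < c \<and> A r a = 1 \<and> A r b = 1 \<and> A r c = 1"
    have "z a + z b + z c = 1" using zs[of r] row_sum[OF t, of a b c r z] h by simp
    hence "real_of_int (z a) + of_int (z b) + of_int (z c) = 1" by (metis of_int_add of_int_1)
    thus "p $ Y3 + p $ X a + p $ XP b + p $ XP c = 2" by (simp add: p_def)
  qed
  hence "p \<in> F1 A" unfolding F1_def by (simp add: p_def)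
  thus ?thesis by blast
qed

lemma F1_Part:
  fixes A :: "'m::finite \<Rightarrow> 'n::{finite,linorder} \<Rightarrow> int"
  assumes t: "three_ones A"
  shows "F1 A = {} \<longleftrightarrow> Part A = {}"
proof
  assume "F1 A = {}" thus "Part A = {}" using Part_F1[OF t] by blast
next
  assume P: "Part A = {}"
  show "F1 A = {}"
  proof (rule ccontr)
    assume "F1 A \<noteq> {}"
    then obtain x where "x \<in> F1 A" by blast
    hence "x \<in> NPadj A" "x $ Y1 + x $ Y2 = 1" unfolding F1_def by auto
    thus False using key[OF t] P by blast
  qed
qed

lemma NP_small:
  fixes A :: "'m::finite \<Rightarrow> 'n::{finite,linorder} \<Rightarrow> int"
  assumes t: "three_ones A" and P: "Part A = {}"
  shows "NPadj A = {x0, x0bar}"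
proof
  show "{x0, x0bar} \<subseteq> NPadj A" using x0_in by auto
next
  show "NPadj A \<subseteq> {x0, x0bar}"
  proof
    fix x assume x: "x \<in> NPadj A"
    have xv: "\<And>c. x $ c \<in> {0,1}" and xb: "\<And>j. x $ X j + x $ XB j = 1"
      and xp: "\<And>j. x $ Y1 + x $ Y2 + x $ XP j + x $ XB j = 2"
      and rw: "\<And>r a b c. a < b \<Longrightarrow> b < c \<Longrightarrow> A r a = 1 \<Longrightarrow> A r b = 1 \<Longrightarrow> A r c = 1 \<Longrightarrow>
              x $ Y3 + x $ X a + x $ XP b + x $ XP c = 2"
      using x unfolding NPadj_def by auto
    obtain a b c where abc: "a < b" "b < c" "A undefined a = 1" "A undefined b = 1" "A undefined c = 1"
      using row_exists[OF t] by blast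
    note r = rw[OF abc]
    have "x $ Y1 + x $ Y2 \<noteq> 1" using key[OF t x] P by blast
    hence "(x $ Y1 = 0 \<and> x $ Y2 = 0) \<or> (x $ Y1 = 1 \<and> x $ Y2 = 1)"
      using xv[of Y1] xv[of Y2] by auto
    thus "x \<in> {x0, x0bar}"
    proof
      assume h: "x $ Y1 = 0 \<and> x $ Y2 = 0"
      have "x = x0"
      proof (subst vec_eq_iff, rule allI)
        fix d show "x $ d = x0 $ d"
        proof (cases d)
          case Y3 then show ?thesis
            using r h xp[of b] xp[of c] xb[of a] xv[of "XB b"] xv[of "XB c"] xv[of "XP b"] xv[of "XP c"] xv[of "X a"] xv[of Y3]
            by (auto simp: x0_def)
        next
          case (X j) then show ?thesis using h xp[of j] xb[of j] xv[of "X j"] xv[of "XB j"] xv[of "XP j"]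
            by (auto simp: x0_def)
        next
          case (XB j) then show ?thesis using h xp[of j] xb[of j] xv[of "X j"] xv[of "XB j"] xv[of "XP j"]
            by (auto simp: x0_def)
        next
          case (XP j) then show ?thesis using h xp[of j] xb[of j] xv[of "X j"] xv[of "XB j"] xv[of "XP j"]
            by (auto simp: x0_def)
        qed (use h in \<open>auto simp: x0_def\<close>)
      qed
      thus ?thesis by simp
    next
      assume h: "x $ Y1 = 1 \<and> x $ Y2 = 1"
      have "x = x0bar"
      proof (subst vec_eq_iff, rule allI)
        fix d show "x $ d = x0bar $ d"
        proof (cases d)
          case Y3 then show ?thesis
            using r h xp[of b] xp[of c] xb[of a] xv[of "XB b"] xv[of "XB c"] xv[of "XP b"] xv[of "XP c"] xv[of "X a"] xv[of Y3]
            by (auto simp: x0bar_def x0_def)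
        next
          case (X j) then show ?thesis using h xp[of j] xb[of j] xv[of "X j"] xv[of "XB j"] xv[of "XP j"]
            by (auto simp: x0bar_def x0_def)
        next
          case (XB j) then show ?thesis using h xp[of j] xb[of j] xv[of "X j"] xv[of "XB j"] xv[of "XP j"]
            by (auto simp: x0bar_def x0_def)
        next
          case (XP j) then show ?thesis using h xp[of j] xb[of j] xv[of "X j"] xv[of "XB j"] xv[of "XP j"]
            by (auto simp: x0bar_def x0_def)
        qed (use h in \<open>auto simp: x0bar_def x0_def\<close>)
      qed
      thus ?thesis by simp
    qed
  qed
qed


lemma not_adj:
  fixes A :: "'m::finite \<Rightarrow> 'n::{finite,linorder} \<Rightarrow> int"
  assumes z: "z \<in> F1 A"
  shows "\<not> (convex hull {x0 :: real ^ 'n coord, x0bar}) face_of (convex hull (NPadj A))"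
proof
  assume F: "convex hull {x0 :: real ^ 'n coord, x0bar} face_of (convex hull (NPadj A))"
  define w :: "real ^ 'n coord" where "w = 1 - z"
  have zN: "z \<in> NPadj A" and zy: "z $ Y1 = 0" "z $ Y2 = 1" "z $ Y3 = 1" using z unfolding F1_def by auto
  have zv: "\<And>c. z $ c \<in> {0,1}" and zb: "\<And>j. z $ X j + z $ XB j = 1"
    and zp: "\<And>j. z $ Y1 + z $ Y2 + z $ XP j + z $ XB j = 2"
    and rw: "\<And>r a b c. a < b \<and> b < c \<and> A r a = 1 \<and> A r b = 1 \<and> A r c = 1 \<longrightarrow>
            z $ Y3 + z $ X a + z $ XP b + z $ XP c = 2"
    using zN unfolding NPadj_def by auto
  have wN: "w \<in> NPadj A"
    unfolding NPadj_def
  proof (intro CollectI conjI allI impI)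
    fix c show "w $ c \<in> {0,1}" using zv[of c] by (auto simp: w_def)
  next
    fix j show "w $ X j + w $ XB j = 1" using zb[of j] by (simp add: w_def)
  next
    fix j show "w $ Y1 + w $ Y2 + w $ XP j + w $ XB j = 2" using zp[of j] by (simp add: w_def)
  next
    fix r a b c assume "a < b \<and> b < c \<and> A r a = 1 \<and> A r b = 1 \<and> A r c = 1"
    hence "z $ Y3 + z $ X a + z $ XP b + z $ XP c = 2" using rw by blast
    thus "w $ Y3 + w $ X a + w $ XP b + w $ XP c = 2" by (simp add: w_def)
  qed
  have ne: "z \<noteq> w" using zy by (metis vector_minus_component one_index w_def diff_zero zero_neq_one)
  have mid: "midpoint z w = midpoint x0 x0bar"
    unfolding midpoint_def w_def x0bar_def by simp
  have "midpoint z w \<in> convex hull {x0, x0bar}"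
    unfolding mid segment_convex_hull[symmetric] by (rule midpoint_in_closed_segment)
  moreover have "midpoint z w \<in> open_segment z w" using ne by simp
  moreover have "z \<in> convex hull (NPadj A)" "w \<in> convex hull (NPadj A)"
    using zN wN by (auto intro: hull_inc)
  ultimately have "z \<in> convex hull {x0, x0bar}" using face_ofD[OF F] by blast
  then obtain u where "z = (1 - u) *\<^sub>R x0 + u *\<^sub>R x0bar"
    unfolding segment_convex_hull[symmetric] closed_segment_def by blast
  hence "z $ Y1 = u" "z $ Y2 = u" by (simp_all add: x0_comp)
  thus False using zy by simp
qed

theorem mainTheorem5:
  fixes A :: "'m::finite \<Rightarrow> 'n::{finite,linorder} \<Rightarrow> int"
  assumes "three_ones A"
  shows "(adjacent_vertices (convex hull (NPadj A)) (x0 :: real ^ 'n coord) x0bar \<longleftrightarrow> F1 A = {})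
       \<and> (F1 A = {} \<longleftrightarrow> Part A = {})"
proof
  show FP: "F1 A = {} \<longleftrightarrow> Part A = {}" using F1_Part[OF assms] .
  show "adjacent_vertices (convex hull (NPadj A)) (x0 :: real ^ 'n coord) x0bar \<longleftrightarrow> F1 A = {}"
  proof
    assume "adjacent_vertices (convex hull (NPadj A)) (x0 :: real ^ 'n coord) x0bar"
    hence "convex hull {x0 :: real ^ 'n coord, x0bar} face_of (convex hull (NPadj A))"
      unfolding adjacent_vertices_def by blast
    thus "F1 A = {}" using not_adj by blast
  next
    assume "F1 A = {}"
    hence N: "NPadj A = {x0, x0bar}" using NP_small[OF assms] FP by blast
    show "adjacent_vertices (convex hull (NPadj A)) (x0 :: real ^ 'n coord) x0bar"
      unfolding adjacent_vertices_def N
    proof (intro conjI)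
      show "{x0} face_of convex hull {x0 :: real ^ 'n coord, x0bar}"
        unfolding face_of_singleton extreme_point_of_convex_hull_2 by simp
      show "{x0bar} face_of convex hull {x0 :: real ^ 'n coord, x0bar}"
        unfolding face_of_singleton extreme_point_of_convex_hull_2 by simp
      show "convex hull {x0 :: real ^ 'n coord, x0bar} face_of convex hull {x0, x0bar}"
        by (rule face_of_refl) (rule convex_convex_hull)
      have "aff_dim {x0 :: real ^ 'n coord, x0bar} = 1" using x0_ne[where 'n='n] aff_dim_2[of "x0 :: real ^ 'n coord" x0bar] by (simp only: if_not_P if_False)
      thus "aff_dim (convex hull {x0 :: real ^ 'n coord, x0bar}) = 1" by (simp only: aff_dim_convex_hull)
    qed
  qed
qed

end
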